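(* Let $b\colon\mathbb R^d\to\mathbb R^d$ be a bounded Borel vector field of class $\mathrm{BV}_{\mathrm{loc}}$, defined everywhere, and let $$M:=\Big\{x\in\mathbb R^d:\ b(x)=0\ \text{and}\ \lim_{r\to0}\frac1r\,\frac{1}{\mathscr L^d(B_r(x))}\int_{B_r(x)}|b(y)|\,dy=0\Big\},$$ i.e. the set of points where $b$ vanishes, is approximately differentiable, and has zero approximate differential. Let $u\in L^\infty(\mathbb R^d)$ and suppose that $\mathrm{div}(ub)=\lambda$ in the sense of distributions, where $\lambda$ is a Radon measure on $\mathbb R^d$. Then $|\lambda|\llcorner M=0$, i.e. $|\lambda|(M)=0$.
   Context: $B_r(x)$ is the open ball of radius $r$ centered at $x$, $\mathscr L^d$ is Lebesgue measure, $|\lambda|$ is the total variation measure of $\lambda$. Approximate differentiability at $x$ with approximate value $b(x)$ and approximate differential $L$ means $\lim_{r\to 0} r^{-1}\frac{1}{\mathscr L^d(B_r(x))}\int_{B_r(x)}|b(y)-b(x)-L(y-x)|dy=0$; with $b(x)=0$ and $L=0$ this is the condition written in the definition of $M$. *)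

theory Defs
  imports "HOL-Analysis.Analysis"
begin

fun Ck :: "nat \<Rightarrow> ('a::euclidean_space \<Rightarrow> real) \<Rightarrow> bool" where
  "Ck 0 f = continuous_on UNIV f"
| "Ck (Suc k) f = (continuous_on UNIV f \<and> f differentiable_on UNIV \<and>
      (\<forall>i\<in>Basis. Ck k (\<lambda>x. frechet_derivative f (at x) i)))"

definition smooth_fun :: "('a::euclidean_space \<Rightarrow> real) \<Rightarrow> bool" where
  "smooth_fun f \<longleftrightarrow> (\<forall>k. Ck k f)"

definition test_fun :: "('a::euclidean_space \<Rightarrow> real) \<Rightarrow> bool" where
  "test_fun \<phi> \<longleftrightarrow> smooth_fun \<phi> \<and> compact (closure {x. \<phi> x \<noteq> 0})"

definition radon_measure :: "'a::euclidean_space measure \<Rightarrow> bool" where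
  "radon_measure \<mu> \<longleftrightarrow> sets \<mu> = sets borel \<and> (\<forall>K. compact K \<longrightarrow> emeasure \<mu> K < \<infinity>)"

text \<open>A real (signed) Radon measure \<lambda> is represented by its Jordan decomposition
  \<lambda> = \<mu>p - \<mu>m, with \<mu>p, \<mu>m positive Radon measures that are mutually singular;
  its total variation is |\<lambda>| = \<mu>p + \<mu>m.\<close>
definition signed_radon :: "'a::euclidean_space measure \<Rightarrow> 'a measure \<Rightarrow> bool" where
  "signed_radon \<mu>p \<mu>m \<longleftrightarrow> radon_measure \<mu>p \<and> radon_measure \<mu>m \<and>
     (\<exists>A\<in>sets borel. emeasure \<mu>p A = 0 \<and> emeasure \<mu>m (UNIV - A) = 0)"

definition tv_null :: "'a::euclidean_space measure \<Rightarrow> 'a measure \<Rightarrow> 'a set \<Rightarrow> bool" where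
  "tv_null \<mu>p \<mu>m S \<longleftrightarrow> (\<exists>N\<in>sets borel. S \<subseteq> N \<and> emeasure \<mu>p N + emeasure \<mu>m N = 0)"

definition BV_loc :: "('a::euclidean_space \<Rightarrow> 'a) \<Rightarrow> bool" where
  "BV_loc b \<longleftrightarrow> b \<in> borel_measurable lebesgue \<and>
     (\<forall>K. compact K \<longrightarrow> set_integrable lebesgue K (\<lambda>x. norm (b x))) \<and>
     (\<forall>i\<in>Basis. \<forall>j\<in>Basis. \<exists>\<nu>p \<nu>m. signed_radon \<nu>p \<nu>m \<and>
        (\<forall>\<phi>. test_fun \<phi> \<longrightarrow>
           (\<integral>x. (b x \<bullet> i) * frechet_derivative \<phi> (at x) j \<partial>lebesgue)
             = - ((\<integral>x. \<phi> x \<partial>\<nu>p) - (\<integral>x. \<phi> x \<partial>\<nu>m))))"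

definition div_eq :: "('a::euclidean_space \<Rightarrow> real) \<Rightarrow> ('a \<Rightarrow> 'a) \<Rightarrow> 'a measure \<Rightarrow> 'a measure \<Rightarrow> bool" where
  "div_eq u b \<mu>p \<mu>m \<longleftrightarrow> (\<forall>\<phi>. test_fun \<phi> \<longrightarrow>
     - (\<integral>x. u x * frechet_derivative \<phi> (at x) (b x) \<partial>lebesgue)
       = (\<integral>x. \<phi> x \<partial>\<mu>p) - (\<integral>x. \<phi> x \<partial>\<mu>m))"

end

theory Submission
  imports Defs "HOL-Computational_Algebra.Polynomial"
begin


lemma Ck_cont: "Ck k f \<Longrightarrow> continuous_on UNIV f"
  by (cases k) auto

lemma Ck_Suc_mono: "Ck (Suc k) f \<Longrightarrow> Ck k f"
proof (induction k arbitrary: f)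
  case 0 then show ?case by simp
next
  case (Suc k)
  then show ?case by simp
qed

lemma Ck_le_mono: "Ck k f \<Longrightarrow> m \<le> k \<Longrightarrow> Ck m f"
proof (induction k)
  case 0 then show ?case by simp
next
  case (Suc k) then show ?case using Ck_Suc_mono le_Suc_eq by blast
qed

lemma fd_apply:
  assumes "f differentiable at x"
  shows "frechet_derivative f (at x) = (SOME f'. (f has_derivative f') (at x))"
  by (simp add: frechet_derivative_def)

lemma Ck_const: "Ck k (\<lambda>x. c)"
proof (induction k arbitrary: c)
  case 0 then show ?case by simp
next
  case (Suc k)
  have "frechet_derivative (\<lambda>x. c) (at x) = (\<lambda>h. 0)" for x :: 'a
    by (rule frechet_derivative_at[symmetric]) (rule has_derivative_const)
  then show ?case using Suc by (simp add: differentiable_on_def)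
qed

lemma Ck_add:
  fixes f g :: "'a::euclidean_space \<Rightarrow> real"
  shows "Ck k f \<Longrightarrow> Ck k g \<Longrightarrow> Ck k (\<lambda>x. f x + g x)"
proof (induction k arbitrary: f g)
  case 0 then show ?case by (auto intro: continuous_on_add)
next
  case (Suc k)
  have df: "f differentiable at x" and dg: "g differentiable at x" for x
    using Suc.prems by (auto simp: differentiable_on_def)
  have "frechet_derivative (\<lambda>x. f x + g x) (at x) =
        (\<lambda>h. frechet_derivative f (at x) h + frechet_derivative g (at x) h)" for x
    by (rule frechet_derivative_at[symmetric])
       (intro has_derivative_add frechet_derivative_works[THEN iffD1] df dg)
  then show ?case using Suc
    by (auto intro!: continuous_on_add differentiable_on_add)
qed

lemma Ck_mult:
  fixes f g :: "'a::euclidean_space \<Rightarrow> real"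
  shows "Ck k f \<Longrightarrow> Ck k g \<Longrightarrow> Ck k (\<lambda>x. f x * g x)"
proof (induction k arbitrary: f g)
  case 0 then show ?case by (auto intro: continuous_on_mult)
next
  case (Suc k)
  have df: "f differentiable at x" and dg: "g differentiable at x" for x
    using Suc.prems by (auto simp: differentiable_on_def)
  have "frechet_derivative (\<lambda>x. f x * g x) (at x) =
        (\<lambda>h. f x * frechet_derivative g (at x) h + frechet_derivative f (at x) h * g x)" for x
    by (rule frechet_derivative_at[symmetric])
       (intro has_derivative_mult frechet_derivative_works[THEN iffD1] df dg)
  moreover have "Ck k f" "Ck k g" using Suc.prems Ck_Suc_mono by blast+
  ultimately show ?case using Suc
    by (auto intro!: continuous_on_mult differentiable_on_mult Ck_add)
qed




lemma lim_poly_exp: "((\<lambda>s. poly p s * exp (- s)) \<longlongrightarrow> (0::real)) at_top"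
proof -
  have "((\<lambda>s. \<Sum>i\<le>degree p. coeff p i * (s ^ i / exp s)) \<longlongrightarrow> (\<Sum>i\<le>degree p. coeff p i * 0)) at_top"
    by (intro tendsto_sum tendsto_mult tendsto_const tendsto_power_div_exp_0)
  moreover have "poly p s * exp (- s) = (\<Sum>i\<le>degree p. coeff p i * (s ^ i / exp s))" for s
    unfolding poly_altdef exp_minus by (simp add: sum_distrib_right divide_inverse mult.assoc)
  ultimately show ?thesis by simp
qed

fun P :: "nat \<Rightarrow> real poly" where
  "P 0 = 1"
| "P (Suc n) = [:0,0,1:] * (P n - pderiv (P n))"

definition F :: "nat \<Rightarrow> real \<Rightarrow> real" where
  "F n t = (if t > 0 then poly (P n) (inverse t) * exp (- inverse t) else 0)"

lemma F_deriv_pos: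
  assumes t: "t > 0"
  shows "((\<lambda>t. poly p (inverse t) * exp (- inverse t)) has_real_derivative
          poly ([:0,0,1:] * (p - pderiv p)) (inverse t) * exp (- inverse t)) (at t)"
proof -
  have i: "(inverse has_real_derivative - (inverse t ^ 2)) (at t)"
    using DERIV_inverse[of t] t by (simp add: power2_eq_square)
  have a: "((\<lambda>t. poly p (inverse t)) has_real_derivative poly (pderiv p) (inverse t) * (- (inverse t ^ 2))) (at t)"
    by (rule DERIV_chain2[OF poly_DERIV i])
  have i2: "((\<lambda>t. - inverse t) has_real_derivative (inverse t ^ 2)) (at t)"
    using DERIV_minus[OF i] by simp
  have b: "((\<lambda>t. exp (- inverse t)) has_real_derivative exp (- inverse t) * (inverse t ^ 2)) (at t)"
    by (rule DERIV_chain2[OF DERIV_exp i2])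
  show ?thesis using DERIV_mult[OF a b]
    by (simp add: algebra_simps power2_eq_square)
qed

lemma F_lim_right: "((\<lambda>h. F n h / h) \<longlongrightarrow> 0) (at_right 0)"
proof -
  have "((\<lambda>h. poly (pCons 0 (P n)) (inverse h) * exp (- inverse h)) \<longlongrightarrow> 0) (at_right (0::real))"
    using filterlim_compose[OF lim_poly_exp[of "pCons 0 (P n)"] filterlim_inverse_at_top_right]
    by (simp only: o_def)
  moreover have "eventually (\<lambda>h. poly (pCons 0 (P n)) (inverse h) * exp (- inverse h) = F n h / h) (at_right (0::real))"
    by (intro eventually_at_rightI[of 0 1]) (auto simp: F_def field_simps)
  ultimately show ?thesis by (rule Lim_transform_eventually)
qed

lemma F_deriv: "(F n has_real_derivative F (Suc n) t) (at t)"
proof -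
  consider "t > 0" | "t < 0" | "t = 0" by linarith
  then show ?thesis
  proof cases
    case 1
    show ?thesis
      apply (rule has_field_derivative_transform_within_open[where S="{0<..}"])
      using F_deriv_pos[OF 1, of "P n"] 1 by (auto simp: F_def)
  next
    case 2
    show ?thesis
      apply (rule has_field_derivative_transform_within_open[where f="\<lambda>_. 0" and S="{..<0}"])
      using 2 by (auto simp: F_def)
  next
    case 3
    have "((\<lambda>h. (F n (0 + h) - F n 0) / h) \<longlongrightarrow> 0) (at 0)"
    proof (rule filterlim_split_at)
      show "((\<lambda>h. (F n (0 + h) - F n 0) / h) \<longlongrightarrow> 0) (at_right 0)"
        using F_lim_right[of n] by (simp add: F_def)
      have "eventually (\<lambda>h. 0 = (F n (0 + h) - F n 0) / h) (at_left (0::real))"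
        by (intro eventually_at_leftI[of "-1"]) (auto simp: F_def)
      then show "((\<lambda>h. (F n (0 + h) - F n 0) / h) \<longlongrightarrow> 0) (at_left 0)"
        by (rule Lim_transform_eventually[OF tendsto_const])
    qed
    then show ?thesis using 3 by (simp add: DERIV_def F_def)
  qed
qed

lemma F_cont: "continuous_on UNIV (F n)"
  using F_deriv DERIV_isCont continuous_at_imp_continuous_on by blast

lemma F0_pos: "t > 0 \<Longrightarrow> F 0 t = exp (- inverse t)"
  by (simp add: F_def)

lemma F0_bounds: "0 \<le> F 0 t" "F 0 t \<le> 1"
  by (auto simp: F_def)

lemma F0_zero: "t \<le> 0 \<Longrightarrow> F n t = 0"
  by (simp add: F_def)

lemma F0_lower: "t \<ge> 1/2 \<Longrightarrow> F 0 t \<ge> exp (-2)"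
proof -
  assume t: "t \<ge> 1/2"
  then have "inverse t \<le> inverse (1/2)" by (intro le_imp_inverse_le) auto
  then have "- 2 \<le> - inverse t" by simp
  then show ?thesis using t by (simp add: F_def)
qed




lemma Ck_affine: "Ck k (\<lambda>y::'a::euclidean_space. c + y \<bullet> w)"
proof (cases k)
  case 0 then show ?thesis by (simp add: continuous_intros)
next
  case (Suc k')
  have "frechet_derivative (\<lambda>y::'a. c + y \<bullet> w) (at x) = (\<lambda>h. h \<bullet> w)" for x
    by (rule frechet_derivative_at[symmetric]) (auto intro!: derivative_eq_intros)
  moreover have "(\<lambda>y::'a. c + y \<bullet> w) differentiable_on UNIV"
    by (auto intro!: derivative_eq_intros simp: differentiable_on_def differentiable_def)
  ultimately show ?thesis using Suc by (auto simp: Ck_const continuous_intros)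
qed

lemma Ck_F_comp:
  fixes z :: "'a::euclidean_space" and s :: real
  shows "Ck k (\<lambda>y. F m (1 - s * ((y - z) \<bullet> (y - z))))"
proof (induction k arbitrary: m)
  case 0
  show ?case
    by simp (intro continuous_on_compose2[OF F_cont] continuous_intros, auto)
next
  case (Suc k)
  let ?g = "\<lambda>y::'a. 1 - s * ((y - z) \<bullet> (y - z))"
  have dg: "(?g has_derivative (\<lambda>h. - (s * (2 * ((y - z) \<bullet> h))))) (at y)" for y
    by (auto intro!: derivative_eq_intros simp: inner_commute algebra_simps)
  have dc: "((\<lambda>y. F m (?g y)) has_derivative (\<lambda>h. - (s * (2 * ((y - z) \<bullet> h))) * F (Suc m) (?g y))) (at y)" for y
    by (rule DERIV_compose_FDERIV[OF F_deriv dg])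
  have fd: "frechet_derivative (\<lambda>y. F m (?g y)) (at y) i =
      (2 * s * (z \<bullet> i) + y \<bullet> (- (2 * s) *\<^sub>R i)) * F (Suc m) (?g y)" for y i
    using frechet_derivative_at[OF dc, of y, symmetric]
    by (simp add: inner_diff_left inner_commute algebra_simps)
  have "Ck k (\<lambda>y. (2 * s * (z \<bullet> i) + y \<bullet> (- (2 * s) *\<^sub>R i)) * F (Suc m) (?g y))" for i
    by (intro Ck_mult Ck_affine Suc.IH)
  moreover have "(\<lambda>y. F m (?g y)) differentiable_on UNIV"
    using dc by (auto simp: differentiable_on_def differentiable_def)
  moreover have "continuous_on UNIV (\<lambda>y. F m (?g y))"
    using Suc.IH[of m] Ck_cont by blast
  ultimately show ?case by (simp add: fd)
qed




lemma dg_gen: "((\<lambda>y::'a::euclidean_space. 1 - s * ((y - z) \<bullet> (y - z))) has_derivative (\<lambda>h. - (s * (2 * ((y - z) \<bullet> h))))) (at y)"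
  by (auto intro!: derivative_eq_intros simp: inner_commute algebra_simps)

definition psi :: "'a::euclidean_space \<Rightarrow> real \<Rightarrow> 'a \<Rightarrow> real" where
  "psi z r y = F 0 (1 - (1 / r^2) * ((y - z) \<bullet> (y - z)))"

lemma psi_smooth: "smooth_fun (psi z r)"
  unfolding smooth_fun_def psi_def using Ck_F_comp by blast

lemma psi_nonneg: "0 \<le> psi z r y" and psi_le1: "psi z r y \<le> 1"
  by (auto simp: psi_def F0_bounds)

lemma psi_zero:
  assumes "r > 0" "dist y z \<ge> r"
  shows "psi z r y = 0"
proof -
  have "(y - z) \<bullet> (y - z) = (dist y z)^2" by (simp add: dist_norm power2_norm_eq_inner)
  moreover have "r^2 \<le> (dist y z)^2" using assms by (intro power_mono) auto
  ultimately have "1 - (1 / r^2) * ((y - z) \<bullet> (y - z)) \<le> 0" using assms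
    by (simp add: field_simps)
  then show ?thesis by (simp add: psi_def F0_zero)
qed

lemma psi_support: "r > 0 \<Longrightarrow> {y. psi z r y \<noteq> 0} \<subseteq> ball z r"
  using psi_zero by (force simp: dist_commute)

lemma psi_test: "r > 0 \<Longrightarrow> test_fun (psi z r)"
  unfolding test_fun_def using psi_smooth psi_support
  by (metis bounded_ball bounded_subset compact_closure)

lemma psi_lower:
  assumes "r > 0" "dist y z \<le> r / 2"
  shows "psi z r y \<ge> exp (-2)"
proof -
  have "(y - z) \<bullet> (y - z) = (dist y z)^2" by (simp add: dist_norm power2_norm_eq_inner)
  moreover have "(dist y z)^2 \<le> (r/2)^2" using assms by (intro power_mono) auto
  ultimately have "(1 / r^2) * ((y - z) \<bullet> (y - z)) \<le> (1 / r^2) * ((r/2)^2)"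
    by (intro mult_left_mono) auto
  also have "\<dots> = 1/4" using assms by (simp add: field_simps power2_eq_square)
  finally have "(1 / r^2) * ((y - z) \<bullet> (y - z)) \<le> 1/4" .
  then have "1 - (1 / r^2) * ((y - z) \<bullet> (y - z)) \<ge> 1/2" by linarith
  then show ?thesis by (simp add: psi_def F0_lower)
qed

lemma psi_sym: "psi z r y = psi y r z"
proof -
  have "(y - z) \<bullet> (y - z) = (z - y) \<bullet> (z - y)" by (simp add: inner_diff algebra_simps inner_commute)
  then show ?thesis by (simp add: psi_def)
qed

lemma psi_cont: "continuous_on UNIV (\<lambda>p::'a::euclidean_space \<times> 'a. psi (snd p) r (fst p))"
  unfolding psi_def
  by (intro continuous_on_compose2[OF F_cont] continuous_intros) auto

lemma psi_deriv:
  "frechet_derivative (psi z r) (at y) v = - (1 / r^2) * (2 * ((y - z) \<bullet> v)) * F 1 (1 - (1 / r^2) * ((y - z) \<bullet> (y - z)))"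
proof -
  let ?g = "\<lambda>y::'a. 1 - (1/r^2) * ((y - z) \<bullet> (y - z))"
  have dg: "(?g has_derivative (\<lambda>h. - ((1/r^2) * (2 * ((y - z) \<bullet> h))))) (at y)"
    by (rule dg_gen)
  have dc: "(psi z r has_derivative (\<lambda>h. - ((1/r^2) * (2 * ((y - z) \<bullet> h))) * F (Suc 0) (?g y))) (at y)"
    unfolding psi_def by (rule DERIV_compose_FDERIV[OF F_deriv dg])
  show ?thesis unfolding frechet_derivative_at[OF dc, symmetric] by simp
qed

lemma F1_bound: obtains G where "G \<ge> 0" "\<And>t. t \<le> 1 \<Longrightarrow> \<bar>F 1 t\<bar> \<le> G"
proof -
  have "bounded (F 1 ` {0..1})"
    by (intro compact_imp_bounded compact_continuous_image continuous_on_subset[OF F_cont]) auto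
  then obtain G where G0: "\<forall>x\<in>F 1 ` {0..1}. norm x \<le> G"
    unfolding bounded_iff by blast
  have G: "\<bar>F 1 t\<bar> \<le> G" if "t \<in> {0..1}" for t using G0 that by auto
  have "G \<ge> 0" using G[of 0] by simp
  moreover have "\<bar>F 1 t\<bar> \<le> G" if "t \<le> 1" for t
    using G[of t] that \<open>G \<ge> 0\<close> by (cases "t \<le> 0") (auto simp: F0_zero)
  ultimately show ?thesis using that by blast
qed

lemma psi_deriv_bound:
  assumes r: "r > 0" and G: "G \<ge> 0" "\<And>t. t \<le> 1 \<Longrightarrow> \<bar>F 1 t\<bar> \<le> G"
  shows "\<bar>frechet_derivative (psi z r) (at y) v\<bar> \<le> 2 * G / r * norm v * indicator (ball z r) y"
proof (cases "y \<in> ball z r")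
  case False
  then have "dist y z \<ge> r" by (simp add: dist_commute)
  have "(y - z) \<bullet> (y - z) = (dist y z)^2" by (simp add: dist_norm power2_norm_eq_inner)
  moreover have "r^2 \<le> (dist y z)^2" using \<open>dist y z \<ge> r\<close> r by (intro power_mono) auto
  ultimately have "1 - (1 / r^2) * ((y - z) \<bullet> (y - z)) \<le> 0" using r
    by (simp add: field_simps)
  then show ?thesis using False by (simp add: psi_deriv F0_zero)
next
  case True
  let ?t = "1 - (1 / r^2) * ((y - z) \<bullet> (y - z))"
  have t1: "?t \<le> 1" by (simp add: inner_ge_zero)
  have "\<bar>(y - z) \<bullet> v\<bar> \<le> norm (y - z) * norm v" by (rule Cauchy_Schwarz_ineq2)
  also have "\<dots> \<le> r * norm v" using True by (intro mult_right_mono) (auto simp: dist_norm norm_minus_commute)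
  finally have cs: "\<bar>(y - z) \<bullet> v\<bar> \<le> r * norm v" .
  have "\<bar>frechet_derivative (psi z r) (at y) v\<bar> = (1 / r^2) * 2 * \<bar>(y - z) \<bullet> v\<bar> * \<bar>F 1 ?t\<bar>"
    by (simp add: psi_deriv abs_mult)
  also have "\<dots> \<le> (1 / r^2) * 2 * (r * norm v) * G"
    using cs G(2)[OF t1] G(1) r by (intro mult_mono mult_left_mono) auto
  also have "\<dots> = 2 * G / r * norm v * indicator (ball z r) y"
    using True r by (simp add: power2_eq_square field_simps)
  finally show ?thesis .
qed




lemma lambda_est:
  fixes b :: "'a::euclidean_space \<Rightarrow> 'a" and u :: "'a \<Rightarrow> real"
  assumes div: "div_eq u b \<mu>p \<mu>m"
    and Cu: "AE x in lebesgue. \<bar>u x\<bar> \<le> Cu" "Cu \<ge> 0"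
    and intb: "set_integrable lebesgue (ball z r) (\<lambda>x. norm (b x))"
    and r: "r > 0" and G: "G \<ge> 0" "\<And>t. t \<le> 1 \<Longrightarrow> \<bar>F 1 t\<bar> \<le> G"
  shows "(\<integral>x. psi z r x \<partial>\<mu>p) - (\<integral>x. psi z r x \<partial>\<mu>m)
          \<le> Cu * (2 * G / r) * (LINT y:ball z r|lebesgue. norm (b y))"
proof -
  let ?D = "\<lambda>x. frechet_derivative (psi z r) (at x) (b x)"
  have "(\<integral>x. psi z r x \<partial>\<mu>p) - (\<integral>x. psi z r x \<partial>\<mu>m) = - (\<integral>x. u x * ?D x \<partial>lebesgue)"
    using div psi_test[OF r] unfolding div_eq_def by metis
  also have "\<dots> = (\<integral>x. - (u x * ?D x) \<partial>lebesgue)" by simp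
  also have "\<dots> \<le> (\<integral>x. Cu * (2 * G / r) * (indicator (ball z r) x *\<^sub>R norm (b x)) \<partial>lebesgue)"
  proof (rule integral_mono_AE')
    show "integrable lebesgue (\<lambda>x. Cu * (2 * G / r) * (indicator (ball z r) x *\<^sub>R norm (b x)))"
      using intb unfolding set_integrable_def by (intro integrable_mult_right)
    show "AE x in lebesgue. 0 \<le> Cu * (2 * G / r) * (indicator (ball z r) x *\<^sub>R norm (b x))"
      using Cu(2) G(1) r by (auto simp: indicator_def)
    show "AE x in lebesgue. - (u x * ?D x) \<le> Cu * (2 * G / r) * (indicator (ball z r) x *\<^sub>R norm (b x))"
      using Cu(1)
    proof eventually_elim
      case (elim x)
      have "- (u x * ?D x) \<le> \<bar>u x\<bar> * \<bar>?D x\<bar>" by (simp add: abs_mult[symmetric])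
      also have "\<dots> \<le> Cu * (2 * G / r * norm (b x) * indicator (ball z r) x)"
        using elim psi_deriv_bound[OF r G, of z x "b x"] by (intro mult_mono) auto
      finally show ?case by (simp add: mult_ac)
    qed
  qed
  also have "\<dots> = Cu * (2 * G / r) * (LINT y:ball z r|lebesgue. norm (b y))"
    by (simp add: set_lebesgue_integral_def)
  finally show ?thesis .
qed




lemma radon_space: "radon_measure \<mu> \<Longrightarrow> space \<mu> = UNIV"
  unfolding radon_measure_def by (metis sets_eq_imp_space_eq space_borel)

lemma radon_sigma_finite:
  assumes "radon_measure (\<mu>::'a::euclidean_space measure)"
  shows "sigma_finite_measure \<mu>"
proof
  show "\<exists>A::'a set set. countable A \<and> A \<subseteq> sets \<mu> \<and> \<Union>A = space \<mu> \<and> (\<forall>a\<in>A. emeasure \<mu> a \<noteq> \<infinity>)"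
  proof (intro exI[of _ "range (\<lambda>n::nat. cball (0::'a) (real n))"] conjI ballI)
    show "\<Union>(range (\<lambda>n::nat. cball (0::'a) (real n))) = space \<mu>"
      using radon_space[OF assms] by (auto simp: dist_norm intro: real_arch_simple)
    show "range (\<lambda>n::nat. cball (0::'a) (real n)) \<subseteq> sets \<mu>"
      using assms unfolding radon_measure_def by auto
  next
    fix a assume "a \<in> range (\<lambda>n::nat. cball (0::'a) (real n))"
    then obtain n::nat where "a = cball 0 (real n)" by auto
    then have "compact a" by simp
    then show "emeasure \<mu> a \<noteq> \<infinity>" using assms unfolding radon_measure_def by auto
  qed auto
qed

definition omega :: "'a::euclidean_space itself \<Rightarrow> real" where
  "omega _ = measure lborel (ball (0::'a) 1)"

lemma omega_pos: "omega TYPE('a::euclidean_space) > 0"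
  unfolding omega_def using content_ball_pos[of 1 "0::'a"] by simp

lemma emeasure_lborel_ball_eq:
  assumes "s \<ge> 0"
  shows "emeasure lborel (ball (c::'a::euclidean_space) s) = ennreal (s ^ DIM('a) * omega TYPE('a))"
proof -
  have "emeasure lborel (ball c s) = emeasure lebesgue (ball c s)" by simp
  also have "\<dots> = ennreal (s ^ DIM('a)) * emeasure lebesgue (ball (0 :: 'a) 1)"
    using assms by (rule emeasure_lebesgue_ball_conv_unit_ball)
  also have "emeasure lebesgue (ball (0 :: 'a) 1) = ennreal (omega TYPE('a))"
    unfolding omega_def using emeasure_lborel_ball_finite[of "0::'a" 1]
    by (simp add: emeasure_eq_ennreal_measure)
  finally show ?thesis using assms omega_pos[where 'a='a] by (simp add: ennreal_mult)
qed

lemma measure_lebesgue_ball_eq: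
  assumes "s \<ge> 0"
  shows "measure lebesgue (ball (c::'a::euclidean_space) s) = s ^ DIM('a) * omega TYPE('a)"
proof -
  have "measure lebesgue (ball c s) = measure lborel (ball c s)" by simp
  also have "\<dots> = s ^ DIM('a) * omega TYPE('a)"
    using emeasure_lborel_ball_eq[OF assms, of c] omega_pos[where 'a='a] assms
    by (simp add: measure_def)
  finally show ?thesis .
qed

lemma psi_borel: "psi z r \<in> borel_measurable borel"
  using psi_smooth[of z r] unfolding smooth_fun_def
  by (metis Ck_cont borel_measurable_continuous_onI)

lemma psi_integrable:
  assumes "radon_measure \<mu>" "r > 0"
  shows "integrable \<mu> (psi z r)"
proof (rule Bochner_Integration.integrable_bound)
  have s: "sets \<mu> = sets borel" using assms unfolding radon_measure_def by auto
  show "integrable \<mu> (indicator (cball z r) :: _ \<Rightarrow> real)"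
    using assms s unfolding radon_measure_def by (intro integrable_real_indicator) auto
  show "psi z r \<in> borel_measurable \<mu>"
    using psi_borel measurable_cong_sets[OF s refl] by blast
  show "AE x in \<mu>. norm (psi z r x) \<le> norm (indicator (cball z r) x :: real)"
    using psi_zero[OF assms(2), of _ z] psi_nonneg[of z r] psi_le1[of z r]
    by (intro AE_I2) (auto simp: indicator_def dist_commute)
qed

lemma nn_psi:
  assumes "radon_measure \<mu>" "r > 0"
  shows "(\<integral>\<^sup>+x. ennreal (psi z r x) \<partial>\<mu>) = ennreal (\<integral>x. psi z r x \<partial>\<mu>)"
  by (intro nn_integral_eq_integral psi_integrable[OF assms] AE_I2 psi_nonneg)




lemma div_ennreal:
  assumes c: "c > 0" and ab: "a \<ge> 0" "b \<ge> 0"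
    and le: "ennreal c * X \<le> ennreal (c * a) * Y + ennreal (c * b) * Z"
  shows "X \<le> ennreal a * Y + ennreal b * Z"
proof -
  have "ennreal (c * a) * Y + ennreal (c * b) * Z = ennreal c * (ennreal a * Y + ennreal b * Z)"
    using c ab by (simp add: ennreal_mult distrib_left mult.assoc)
  with le have "ennreal c * X \<le> ennreal c * (ennreal a * Y + ennreal b * Z)" by simp
  then show ?thesis using c by (subst (asm) ennreal_mult_le_mult_iff) auto
qed

lemma lint_mono:
  fixes b :: "'a::euclidean_space \<Rightarrow> 'a"
  assumes "A \<subseteq> B" "set_integrable lebesgue B (\<lambda>x. norm (b x))" "A \<in> sets lebesgue"
  shows "(LINT y:A|lebesgue. norm (b y)) \<le> (LINT y:B|lebesgue. norm (b y))"
proof -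
  have iA: "set_integrable lebesgue A (\<lambda>x. norm (b x))"
    by (rule set_integrable_subset[OF assms(2) assms(3) assms(1)])
  show ?thesis unfolding set_lebesgue_integral_def
    using iA assms(2) assms(1) unfolding set_integrable_def
    by (intro integral_mono) (auto simp: indicator_def)
qed

lemma psi_pair_borel1: "(\<lambda>p::'a::euclidean_space \<times> 'a. psi (snd p) r (fst p)) \<in> borel_measurable borel"
  by (rule borel_measurable_continuous_onI[OF psi_cont])

lemma psi_pair_borel2: "(\<lambda>p::'a::euclidean_space \<times> 'a. psi (fst p) r (snd p)) \<in> borel_measurable borel"
  using psi_pair_borel1[of r] by (subst psi_sym) simp

lemma sets_pair_borel:
  assumes "sets \<mu> = sets (borel :: 'a::euclidean_space measure)" "sets \<nu> = sets (borel :: 'b::euclidean_space measure)"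
  shows "sets (\<mu> \<Otimes>\<^sub>M \<nu>) = sets (borel :: ('a \<times> 'b) measure)"
proof -
  have "sets (\<mu> \<Otimes>\<^sub>M \<nu>) = sets (borel \<Otimes>\<^sub>M (borel::'b measure))"
    by (rule sets_pair_measure_cong) (use assms in auto)
  then show ?thesis by (metis borel_prod)
qed

lemma f_borel1:
  assumes "open E"
  shows "(\<lambda>p::'a::euclidean_space \<times> 'a. indicator E (snd p) * ennreal (psi (snd p) r (fst p))) \<in> borel_measurable borel"
proof -
  have "(\<lambda>p::'a \<times> 'a. indicator E (snd p) :: ennreal) = indicator (UNIV \<times> E)"
    by (auto simp: indicator_def)
  moreover have "UNIV \<times> E \<in> sets (borel :: ('a \<times> 'a) measure)"
    using assms by (intro borel_open open_Times) auto
  ultimately have 1: "(\<lambda>p::'a \<times> 'a. indicator E (snd p) :: ennreal) \<in> borel_measurable borel"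
    by (metis borel_measurable_indicator)
  note [measurable] = 1 psi_pair_borel1
  show ?thesis by measurable
qed

lemma f_borel2:
  assumes "open E"
  shows "(\<lambda>p::'a::euclidean_space \<times> 'a. indicator E (fst p) * ennreal (psi (fst p) r (snd p))) \<in> borel_measurable borel"
proof -
  have "(\<lambda>p::'a \<times> 'a. indicator E (fst p) :: ennreal) = indicator (E \<times> UNIV)"
    by (auto simp: indicator_def)
  moreover have "E \<times> UNIV \<in> sets (borel :: ('a \<times> 'a) measure)"
    using assms by (intro borel_open open_Times) auto
  ultimately have 1: "(\<lambda>p::'a \<times> 'a. indicator E (fst p) :: ennreal) \<in> borel_measurable borel"
    by (metis borel_measurable_indicator)
  note [measurable] = 1 psi_pair_borel2
  show ?thesis by measurable
qed




lemma arith1: "(r::real) \<noteq> 0 \<Longrightarrow> Cu * (2 * G / r) * (e * (2 * r) * X) = 4 * Cu * G * e * X"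
  by (simp add: field_simps)

lemma core:
  fixes b :: "'a::euclidean_space \<Rightarrow> 'a" and u :: "'a \<Rightarrow> real" and S U :: "'a set"
  assumes rp: "radon_measure \<mu>p" and rm: "radon_measure \<mu>m"
    and div: "div_eq u b \<mu>p \<mu>m"
    and Cu: "AE x in lebesgue. \<bar>u x\<bar> \<le> Cu" "Cu \<ge> 0"
    and intb: "\<And>z r. set_integrable lebesgue (ball z r) (\<lambda>x. norm (b x))"
    and G: "G \<ge> 0" "\<And>t. t \<le> 1 \<Longrightarrow> \<bar>F 1 t\<bar> \<le> G"
    and U: "open U"
    and rho: "\<rho> > 0" and eps: "\<epsilon> \<ge> 0"
    and rate: "\<And>x r. x \<in> S \<Longrightarrow> 0 < r \<Longrightarrow> r < \<rho> \<Longrightarrow>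
        (LINT y:ball x r|lebesgue. norm (b y)) \<le> \<epsilon> * r * measure lebesgue (ball x r)"
    and sub: "\<And>x. x \<in> S \<Longrightarrow> ball x \<rho> \<subseteq> U"
  shows "\<exists>N\<in>sets borel. S \<subseteq> N \<and> emeasure \<mu>p N \<le>
     ennreal (exp 2 * 2 ^ DIM('a)) * emeasure \<mu>m U
     + ennreal (exp 2 * 4 ^ DIM('a) * (4 * Cu * G * \<epsilon>)) * emeasure lborel U"
proof -
  define r where "r = \<rho> / 4"
  have r: "r > 0" using rho by (simp add: r_def)
  define d where "d = DIM('a)"
  define \<omega> where "\<omega> = omega TYPE('a)"
  have \<omega>: "\<omega> > 0" unfolding \<omega>_def by (rule omega_pos)
  define E where "E = (\<Union>x\<in>S. ball x (r/2))"
  have E: "open E" unfolding E_def by auto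
  have EU: "E \<subseteq> U"
  proof
    fix z assume "z \<in> E"
    then obtain x where x: "x \<in> S" "dist x z < r/2" by (auto simp: E_def)
    then have "z \<in> ball x \<rho>" using r rho by (simp add: r_def)
    then show "z \<in> U" using sub[OF x(1)] by auto
  qed
  define f where "f = (\<lambda>y z. indicator E z * ennreal (psi z r y))"
  define \<Psi> where "\<Psi> = (\<lambda>y. \<integral>\<^sup>+z. f y z \<partial>lborel)"
  define c where "c = exp (-2) * ((r/2)^d * \<omega>)"
  have c: "c > 0" using r \<omega> by (simp add: c_def)
  define N where "N = {y. ennreal c \<le> \<Psi> y}"
  have sb: "sets \<mu>p = sets borel" "sets \<mu>m = sets borel"
    using rp rm unfolding radon_measure_def by auto
  have fm1: "case_prod f \<in> borel_measurable borel"
    using f_borel1[OF E, of r] by (simp add: f_def case_prod_beta')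
  have fm2: "case_prod (\<lambda>z y. f y z) \<in> borel_measurable borel"
    using f_borel2[OF E, of r] by (simp add: f_def case_prod_beta')
  have fmu: "case_prod f \<in> borel_measurable (\<mu> \<Otimes>\<^sub>M lborel)" if "sets \<mu> = sets borel" for \<mu>
    by (subst measurable_cong_sets[OF sets_pair_borel[OF that sets_lborel] refl]) (rule fm1)
  have \<Psi>m: "\<Psi> \<in> borel_measurable borel"
    unfolding \<Psi>_def by (rule lborel.borel_measurable_nn_integral) (rule fmu, simp)
  have Nm: "N \<in> sets borel"
    unfolding N_def using \<Psi>m by measurable
  have ton: "(\<integral>\<^sup>+y. \<Psi> y \<partial>\<mu>) = (\<integral>\<^sup>+z. indicator E z * ennreal (\<integral>x. psi z r x \<partial>\<mu>) \<partial>lborel)"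
    if "radon_measure \<mu>" for \<mu>
  proof -
    have s: "sets \<mu> = sets borel" using that unfolding radon_measure_def by auto
    have ps: "pair_sigma_finite \<mu> lborel"
      unfolding pair_sigma_finite_def using radon_sigma_finite[OF that] lborel.sigma_finite_measure_axioms
      by auto
    have "(\<integral>\<^sup>+y. \<Psi> y \<partial>\<mu>) = (\<integral>\<^sup>+z. (\<integral>\<^sup>+y. f y z \<partial>\<mu>) \<partial>lborel)"
      unfolding \<Psi>_def by (rule pair_sigma_finite.Fubini'[OF ps fmu[OF s], symmetric])
    also have "\<dots> = (\<integral>\<^sup>+z. indicator E z * ennreal (\<integral>x. psi z r x \<partial>\<mu>) \<partial>lborel)"
    proof (rule nn_integral_cong)
      fix z
      have pm: "(\<lambda>y. ennreal (psi z r y)) \<in> borel_measurable \<mu>"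
        by (rule measurable_compose[OF _ measurable_ennreal], subst measurable_cong_sets[OF s refl]) (rule psi_borel)
      show "(\<integral>\<^sup>+y. f y z \<partial>\<mu>) = indicator E z * ennreal (\<integral>x. psi z r x \<partial>\<mu>)"
        unfolding f_def using nn_integral_cmult[OF pm, of "indicator E z"] nn_psi[OF that r, of z]
        by simp
    qed
    finally show ?thesis .
  qed
  have SN: "S \<subseteq> N"
  proof
    fix y assume y: "y \<in> S"
    have "ennreal c = ennreal (exp (-2)) * emeasure lborel (ball y (r/2))"
      using emeasure_lborel_ball_eq[of "r/2" y] r \<omega>
      by (simp add: c_def d_def \<omega>_def ennreal_mult)
    also have "\<dots> = (\<integral>\<^sup>+z. ennreal (exp (-2)) * indicator (ball y (r/2)) z \<partial>lborel)"
      by (rule nn_integral_cmult_indicator[symmetric]) simp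
    also have "\<dots> \<le> \<Psi> y"
      unfolding \<Psi>_def
    proof (rule nn_integral_mono)
      fix z
      show "ennreal (exp (-2)) * indicator (ball y (r/2)) z \<le> f y z"
      proof (cases "z \<in> ball y (r/2)")
        case True
        then have "z \<in> E" using y by (auto simp: E_def)
        moreover have "psi z r y \<ge> exp (-2)"
          using True r by (intro psi_lower) (auto simp: dist_commute)
        ultimately show ?thesis using True by (simp add: f_def ennreal_leI)
      qed simp
    qed
    finally show "y \<in> N" by (simp add: N_def)
  qed
  have UBm: "(\<integral>\<^sup>+y. \<Psi> y \<partial>\<mu>m) \<le> ennreal (r^d * \<omega>) * emeasure \<mu>m U"
  proof -
    have "\<Psi> y \<le> ennreal (r^d * \<omega>) * indicator U y" for y
    proof -
      have "\<Psi> y \<le> (\<integral>\<^sup>+z. indicator U y * indicator (ball y r) z \<partial>lborel)"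
        unfolding \<Psi>_def
      proof (rule nn_integral_mono)
        fix z
        show "f y z \<le> indicator U y * indicator (ball y r) z"
        proof (cases "z \<in> E \<and> dist y z < r")
          case True
          then obtain x where x: "x \<in> S" "dist x z < r/2" by (auto simp: E_def)
          have "dist x y \<le> dist x z + dist z y" by (rule dist_triangle)
          then have "dist x y < \<rho>" using x True r by (simp add: r_def dist_commute)
          then have "y \<in> U" using sub[OF x(1)] by auto
          then show ?thesis using True psi_le1[of z r y] by (simp add: f_def dist_commute)
        next
          case False
          show ?thesis
          proof (cases "z \<in> E")
            case False then show ?thesis by (simp add: f_def)
          next
            case True
            with False have "\<not> dist y z < r" by simp
            then have "psi z r y = 0" using r by (intro psi_zero) auto
            then show ?thesis by (simp add: f_def)
          qed
        qed
      qed
      also have "\<dots> = indicator U y * emeasure lborel (ball y r)"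
        by (rule nn_integral_cmult_indicator) simp
      also have "\<dots> = ennreal (r^d * \<omega>) * indicator U y"
        using emeasure_lborel_ball_eq[of r y] r by (simp add: d_def \<omega>_def mult.commute)
      finally show ?thesis .
    qed
    then have "(\<integral>\<^sup>+y. \<Psi> y \<partial>\<mu>m) \<le> (\<integral>\<^sup>+y. ennreal (r^d * \<omega>) * indicator U y \<partial>\<mu>m)"
      by (intro nn_integral_mono) auto
    also have "\<dots> = ennreal (r^d * \<omega>) * emeasure \<mu>m U"
      using U sb by (intro nn_integral_cmult_indicator) auto
    finally show ?thesis .
  qed
  define B where "B = 4 * Cu * G * \<epsilon> * ((2*r)^d * \<omega>)"
  have B: "B \<ge> 0" using Cu G eps \<omega> r by (simp add: B_def)
  have pw: "(\<integral>x. psi z r x \<partial>\<mu>p) \<le> (\<integral>x. psi z r x \<partial>\<mu>m) + B" if z: "z \<in> E" for z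
  proof -
    obtain x where x: "x \<in> S" "dist x z < r/2" using z by (auto simp: E_def)
    have bb: "ball z r \<subseteq> ball x (2*r)"
    proof
      fix w assume "w \<in> ball z r"
      then have "dist z w < r" by simp
      moreover have "dist x w \<le> dist x z + dist z w" by (rule dist_triangle)
      ultimately have "dist x w < 2*r" using x(2) r by linarith
      then show "w \<in> ball x (2*r)" by simp
    qed
    have "(\<integral>x. psi z r x \<partial>\<mu>p) - (\<integral>x. psi z r x \<partial>\<mu>m)
        \<le> Cu * (2 * G / r) * (LINT y:ball z r|lebesgue. norm (b y))"
      by (rule lambda_est[OF div Cu intb r G])
    also have "\<dots> \<le> Cu * (2 * G / r) * (LINT y:ball x (2*r)|lebesgue. norm (b y))"
      using Cu G r by (intro mult_left_mono lint_mono[OF bb intb]) auto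
    also have "\<dots> \<le> Cu * (2 * G / r) * (\<epsilon> * (2*r) * measure lebesgue (ball x (2*r)))"
      using Cu G r rho by (intro mult_left_mono rate[OF x(1)]) (auto simp: r_def)
    also have "\<dots> = B"
      using arith1[of r Cu G \<epsilon> "(2*r)^d * \<omega>"] r measure_lebesgue_ball_eq[of "2*r" x]
      unfolding B_def d_def \<omega>_def by simp
    finally show ?thesis by linarith
  qed
  have mmeas: "(\<lambda>z. indicator E z * ennreal (\<integral>x. psi z r x \<partial>\<mu>m)) \<in> borel_measurable lborel"
  proof -
    have "(\<lambda>z. \<integral>\<^sup>+y. f y z \<partial>\<mu>m) \<in> borel_measurable lborel"
    proof (rule sigma_finite_measure.borel_measurable_nn_integral[OF radon_sigma_finite[OF rm]])
      show "(\<lambda>(z, y). f y z) \<in> borel_measurable (lborel \<Otimes>\<^sub>M \<mu>m)"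
        by (subst measurable_cong_sets[OF sets_pair_borel[OF sets_lborel sb(2)] refl]) (rule fm2)
    qed
    moreover have "(\<integral>\<^sup>+y. f y z \<partial>\<mu>m) = indicator E z * ennreal (\<integral>x. psi z r x \<partial>\<mu>m)" for z
    proof -
      have pm: "(\<lambda>y. ennreal (psi z r y)) \<in> borel_measurable \<mu>m"
        by (rule measurable_compose[OF _ measurable_ennreal], subst measurable_cong_sets[OF sb(2) refl]) (rule psi_borel)
      show ?thesis
        unfolding f_def using nn_integral_cmult[OF pm, of "indicator E z"] nn_psi[OF rm r, of z]
        by simp
    qed
    ultimately show ?thesis by simp
  qed
  have UBp: "(\<integral>\<^sup>+y. \<Psi> y \<partial>\<mu>p) \<le> ennreal (r^d * \<omega>) * emeasure \<mu>m U + ennreal B * emeasure lborel U"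
  proof -
    have "(\<integral>\<^sup>+y. \<Psi> y \<partial>\<mu>p) = (\<integral>\<^sup>+z. indicator E z * ennreal (\<integral>x. psi z r x \<partial>\<mu>p) \<partial>lborel)"
      by (rule ton[OF rp])
    also have "\<dots> \<le> (\<integral>\<^sup>+z. indicator E z * ennreal (\<integral>x. psi z r x \<partial>\<mu>m) + ennreal B * indicator E z \<partial>lborel)"
    proof (rule nn_integral_mono)
      fix z
      show "indicator E z * ennreal (\<integral>x. psi z r x \<partial>\<mu>p)
          \<le> indicator E z * ennreal (\<integral>x. psi z r x \<partial>\<mu>m) + ennreal B * indicator E z"
      proof (cases "z \<in> E")
        case True
        have i0: "(\<integral>x. psi z r x \<partial>\<mu>m) \<ge> 0" by (intro integral_nonneg_AE AE_I2 psi_nonneg)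
        have "ennreal (\<integral>x. psi z r x \<partial>\<mu>p) \<le> ennreal ((\<integral>x. psi z r x \<partial>\<mu>m) + B)"
          using pw[OF True] by (rule ennreal_leI)
        then show ?thesis using True i0 B by (simp add: ennreal_plus)
      qed simp
    qed
    also have "\<dots> = (\<integral>\<^sup>+z. indicator E z * ennreal (\<integral>x. psi z r x \<partial>\<mu>m) \<partial>lborel) + ennreal B * emeasure lborel E"
      using mmeas E by (subst nn_integral_add) (auto simp: nn_integral_cmult)
    also have "\<dots> \<le> ennreal (r^d * \<omega>) * emeasure \<mu>m U + ennreal B * emeasure lborel U"
      using UBm ton[OF rm] EU U by (intro add_mono mult_left_mono emeasure_mono) auto
    finally show ?thesis .
  qed
  have "ennreal c * emeasure \<mu>p N = (\<integral>\<^sup>+y. ennreal c * indicator N y \<partial>\<mu>p)"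
    using Nm sb by (simp add: nn_integral_cmult)
  also have "\<dots> \<le> (\<integral>\<^sup>+y. \<Psi> y \<partial>\<mu>p)"
    by (intro nn_integral_mono) (auto simp: N_def indicator_def)
  also have "\<dots> \<le> ennreal (r^d * \<omega>) * emeasure \<mu>m U + ennreal B * emeasure lborel U"
    by (rule UBp)
  also have "r^d * \<omega> = c * (exp 2 * 2 ^ DIM('a))"
  proof -
    have "r^d = (2 * (r/2))^d" by simp
    also have "\<dots> = 2^d * (r/2)^d" by (rule power_mult_distrib)
    finally have rd: "r^d = 2^d * (r/2)^d" .
    have e: "exp (-2::real) * exp 2 = 1" by (simp add: exp_minus)
    have h: "c * (exp 2 * 2 ^ DIM('a)) = (exp (-2) * exp 2) * (2^d * (r/2)^d * \<omega>)"
      unfolding c_def d_def by (simp add: mult_ac)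
    show ?thesis by (simp only: h e mult_1_left rd)
  qed
  also have "B = c * (exp 2 * 4 ^ DIM('a) * (4 * Cu * G * \<epsilon>))"
  proof -
    have "(2*r)^d = (4 * (r/2))^d" by simp
    also have "\<dots> = 4^d * (r/2)^d" by (rule power_mult_distrib)
    finally have rd: "(2*r)^d = 4^d * (r/2)^d" .
    have e: "exp (-2::real) * exp 2 = 1" by (simp add: exp_minus)
    have "c * (exp 2 * 4 ^ DIM('a) * (4 * Cu * G * \<epsilon>)) = (exp (-2) * exp 2) * (4 * Cu * G * \<epsilon> * (4^d * (r/2)^d * \<omega>))"
      unfolding c_def d_def by (simp add: mult_ac)
    then have h: "c * (exp 2 * 4 ^ DIM('a) * (4 * Cu * G * \<epsilon>)) = 4 * Cu * G * \<epsilon> * (4^d * (r/2)^d * \<omega>)"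
      by (simp only: e mult_1_left)
    show ?thesis unfolding B_def h rd by (simp only: mult.assoc)
  qed
  finally have le: "ennreal c * emeasure \<mu>p N \<le> ennreal (c * (exp 2 * 2 ^ DIM('a))) * emeasure \<mu>m U
     + ennreal (c * (exp 2 * 4 ^ DIM('a) * (4 * Cu * G * \<epsilon>))) * emeasure lborel U" .
  have n1: "exp 2 * 2 ^ DIM('a) \<ge> (0::real)" by simp
  have n2: "exp 2 * 4 ^ DIM('a) * (4 * Cu * G * \<epsilon>) \<ge> (0::real)"
    using Cu(2) G(1) eps by simp
  have "emeasure \<mu>p N \<le> ennreal (exp 2 * 2 ^ DIM('a)) * emeasure \<mu>m U
     + ennreal (exp 2 * 4 ^ DIM('a) * (4 * Cu * G * \<epsilon>)) * emeasure lborel U"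
    by (rule div_ennreal[OF c n1 n2 le])
  then show ?thesis using SN Nm by blast
qed




lemma small_open:
  fixes B :: "'a::euclidean_space set"
  assumes rad: "radon_measure \<mu>" and B: "B \<in> sets borel" "emeasure \<mu> B = 0" "B \<subseteq> ball 0 R'"
    and d: "\<delta> > 0"
  shows "\<exists>U. open U \<and> B \<subseteq> U \<and> U \<subseteq> ball 0 R' \<and> emeasure \<mu> U < ennreal \<delta>"
proof -
  have s: "sets \<mu> = sets borel" using rad by (simp add: radon_measure_def)
  define \<nu> where "\<nu> = density \<mu> (indicator (ball 0 R'))"
  have sn: "sets \<nu> = sets borel" using s by (simp add: \<nu>_def)
  have im: "(indicator (ball (0::'a) R') :: 'a \<Rightarrow> ennreal) \<in> borel_measurable \<mu>"
    using s by (intro borel_measurable_indicator) auto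
  have en: "emeasure \<nu> X = emeasure \<mu> (ball 0 R' \<inter> X)" if "X \<in> sets borel" for X
  proof -
    have "emeasure \<nu> X = (\<integral>\<^sup>+x. indicator (ball 0 R') x * indicator X x \<partial>\<mu>)"
      unfolding \<nu>_def using that s by (intro emeasure_density im) auto
    also have "\<dots> = (\<integral>\<^sup>+x. indicator (ball 0 R' \<inter> X) x \<partial>\<mu>)"
      by (intro nn_integral_cong) (auto simp: indicator_def)
    also have "\<dots> = emeasure \<mu> (ball 0 R' \<inter> X)" using that s by (intro nn_integral_indicator) auto
    finally show ?thesis .
  qed
  have "space \<nu> = UNIV" using sn by (metis sets_eq_imp_space_eq space_borel)
  then have fin: "emeasure \<nu> (space \<nu>) \<noteq> \<infinity>"
  proof -
    have "emeasure \<nu> UNIV = emeasure \<mu> (ball 0 R')" using en[of UNIV] by simp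
    also have "\<dots> \<le> emeasure \<mu> (cball 0 R')" using s by (intro emeasure_mono) auto
    also have "\<dots> < \<infinity>" using rad unfolding radon_measure_def by auto
    finally show ?thesis using \<open>space \<nu> = UNIV\<close> by auto
  qed
  have "emeasure \<nu> B = (INF U \<in> {U. B \<subseteq> U \<and> open U}. emeasure \<nu> U)"
    by (rule outer_regular[OF sn fin B(1)])
  moreover have "emeasure \<nu> B = 0"
    using en[OF B(1)] B(2) s emeasure_mono[of "ball 0 R' \<inter> B" B \<mu>] B(1) by auto
  ultimately have "(INF U \<in> {U. B \<subseteq> U \<and> open U}. emeasure \<nu> U) < ennreal \<delta>"
    using d by simp
  then obtain U where U: "B \<subseteq> U" "open U" "emeasure \<nu> U < ennreal \<delta>"
    by (auto simp: INF_less_iff)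
  show ?thesis
  proof (intro exI[of _ "U \<inter> ball 0 R'"] conjI)
    show "open (U \<inter> ball 0 R')" using U by auto
    show "B \<subseteq> U \<inter> ball 0 R'" using U B by auto
    show "U \<inter> ball 0 R' \<subseteq> ball 0 R'" by auto
    have "emeasure \<mu> (U \<inter> ball 0 R') = emeasure \<nu> U" using en[of U] U by (simp add: Int_commute)
    then show "emeasure \<mu> (U \<inter> ball 0 R') < ennreal \<delta>" using U by simp
  qed
qed

lemma rate_from_lim:
  fixes b :: "'a::euclidean_space \<Rightarrow> 'a"
  assumes lim: "((\<lambda>r. (LINT y:ball x r|lebesgue. norm (b y)) / measure lebesgue (ball x r) / r) \<longlongrightarrow> 0) (at_right 0)"
    and e: "e > 0"
  shows "\<exists>\<rho>>0. \<forall>r. 0 < r \<and> r < \<rho> \<longrightarrow> (LINT y:ball x r|lebesgue. norm (b y)) \<le> e * r * measure lebesgue (ball x r)"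
proof -
  have "eventually (\<lambda>r. (LINT y:ball x r|lebesgue. norm (b y)) / measure lebesgue (ball x r) / r < e) (at_right 0)"
    using order_tendstoD(2)[OF lim e] .
  then obtain \<rho> where \<rho>: "\<rho> > 0" "\<And>r. r > 0 \<Longrightarrow> r < \<rho> \<Longrightarrow>
      (LINT y:ball x r|lebesgue. norm (b y)) / measure lebesgue (ball x r) / r < e"
    unfolding eventually_at_right_field by auto
  have "(LINT y:ball x r|lebesgue. norm (b y)) \<le> e * r * measure lebesgue (ball x r)"
    if r: "0 < r" "r < \<rho>" for r
  proof -
    have m: "measure lebesgue (ball x r) > 0"
      using measure_lebesgue_ball_eq[of r x] omega_pos[where 'a='a] r by simp
    have "(LINT y:ball x r|lebesgue. norm (b y)) / (measure lebesgue (ball x r) * r) < e"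
      using \<rho>(2)[OF r] by (simp add: divide_divide_eq_left)
    then show ?thesis using m r by (simp add: divide_less_eq mult_ac)
  qed
  then show ?thesis using \<rho>(1) by blast
qed




lemma arith_b:
  assumes "(X::real) \<ge> 0" "Y \<ge> 0" "e \<ge> 0" "L \<ge> 0" "K \<ge> 0"
  shows "ennreal X * ennreal e + ennreal (Y * (K * e)) * ennreal L = ennreal (e * (X + Y * K * L))"
proof -
  have "ennreal X * ennreal e + ennreal (Y * (K * e)) * ennreal L = ennreal (X * e + Y * (K * e) * L)"
    using assms by (simp add: ennreal_mult ennreal_plus)
  also have "X * e + Y * (K * e) * L = e * (X + Y * K * L)" by (simp add: algebra_simps)
  finally show ?thesis .
qed

lemma step1:
  fixes b :: "'a::euclidean_space \<Rightarrow> 'a" and u :: "'a \<Rightarrow> real" and M A :: "'a set"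
  assumes r1: "radon_measure \<mu>1" and r2: "radon_measure \<mu>2"
    and div: "div_eq u b \<mu>1 \<mu>2"
    and Cu: "AE x in lebesgue. \<bar>u x\<bar> \<le> Cu" "Cu \<ge> 0"
    and intb: "\<And>z r. set_integrable lebesgue (ball z r) (\<lambda>x. norm (b x))"
    and G: "G \<ge> 0" "\<And>t. t \<le> 1 \<Longrightarrow> \<bar>F 1 t\<bar> \<le> G"
    and A: "A \<in> sets borel" "emeasure \<mu>2 (UNIV - A) = 0"
    and lim: "\<And>x. x \<in> M \<Longrightarrow> ((\<lambda>r. (LINT y:ball x r|lebesgue. norm (b y)) / measure lebesgue (ball x r) / r) \<longlongrightarrow> 0) (at_right 0)"
    and e: "e > 0"
  shows "\<exists>H\<in>sets borel. M \<inter> (ball 0 R - A) \<subseteq> H \<and>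
     emeasure \<mu>1 H \<le> ennreal (e * (exp 2 * 2 ^ DIM('a) + exp 2 * 4 ^ DIM('a) * (4 * Cu * G) * measure lborel (ball (0::'a) (R + 1))))"
proof -
  define B where "B = ball (0::'a) R - A"
  have Bm: "B \<in> sets borel" using A by (simp add: B_def)
  have s2: "sets \<mu>2 = sets borel" using r2 by (simp add: radon_measure_def)
  have B0: "emeasure \<mu>2 B = 0"
    using emeasure_mono[of B "UNIV - A" \<mu>2] A s2 by (auto simp: B_def)
  have BR: "B \<subseteq> ball 0 (R + 1)" by (auto simp: B_def)
  obtain U where U: "open U" "B \<subseteq> U" "U \<subseteq> ball 0 (R + 1)" "emeasure \<mu>2 U < ennreal e"
    using small_open[OF r2 Bm B0 BR e] by blast
  define L where "L = measure lborel (ball (0::'a) (R + 1))"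
  have LU: "emeasure lborel U \<le> ennreal L"
  proof -
    have "emeasure lborel U \<le> emeasure lborel (ball (0::'a) (R + 1))"
      using U by (intro emeasure_mono) auto
    also have "\<dots> = ennreal L" unfolding L_def
      using emeasure_lborel_ball_finite[of "0::'a" "R+1"] by (simp add: emeasure_eq_ennreal_measure)
    finally show ?thesis .
  qed
  have L0: "L \<ge> 0" by (simp add: L_def)
  define S where "S = (\<lambda>k::nat. {x \<in> M \<inter> B. (\<forall>r. 0 < r \<and> r < 1 / real (Suc k) \<longrightarrow>
      (LINT y:ball x r|lebesgue. norm (b y)) \<le> e * r * measure lebesgue (ball x r)) \<and> ball x (1 / real (Suc k)) \<subseteq> U})"
  define bnd where "bnd = ennreal (e * (exp 2 * 2 ^ DIM('a) + exp 2 * 4 ^ DIM('a) * (4 * Cu * G) * L))"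
  have "\<forall>k. \<exists>N\<in>sets borel. S k \<subseteq> N \<and> emeasure \<mu>1 N \<le> bnd"
  proof
    fix k :: nat
    have "\<exists>N\<in>sets borel. S k \<subseteq> N \<and> emeasure \<mu>1 N \<le>
        ennreal (exp 2 * 2 ^ DIM('a)) * emeasure \<mu>2 U
        + ennreal (exp 2 * 4 ^ DIM('a) * (4 * Cu * G * e)) * emeasure lborel U"
      by (rule core[OF r1 r2 div Cu intb G U(1), of "1 / real (Suc k)" e "S k"])
         (auto simp: S_def less_imp_le[OF e])
    moreover have "ennreal (exp 2 * 2 ^ DIM('a)) * emeasure \<mu>2 U
        + ennreal (exp 2 * 4 ^ DIM('a) * (4 * Cu * G * e)) * emeasure lborel U \<le> bnd"
    proof -
      have "ennreal (exp 2 * 2 ^ DIM('a)) * emeasure \<mu>2 U \<le> ennreal (exp 2 * 2 ^ DIM('a)) * ennreal e"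
        using U(4) by (intro mult_left_mono) auto
      moreover have "ennreal (exp 2 * 4 ^ DIM('a) * (4 * Cu * G * e)) * emeasure lborel U
          \<le> ennreal (exp 2 * 4 ^ DIM('a) * (4 * Cu * G * e)) * ennreal L"
        using LU by (intro mult_left_mono) auto
      ultimately have "ennreal (exp 2 * 2 ^ DIM('a)) * emeasure \<mu>2 U
        + ennreal (exp 2 * 4 ^ DIM('a) * (4 * Cu * G * e)) * emeasure lborel U
        \<le> ennreal (exp 2 * 2 ^ DIM('a)) * ennreal e + ennreal (exp 2 * 4 ^ DIM('a) * (4 * Cu * G * e)) * ennreal L"
        by (rule add_mono)
      also have "\<dots> = bnd"
        unfolding bnd_def using e Cu(2) G(1) L0
        by (intro arith_b) auto
      finally show ?thesis .
    qed
    ultimately show "\<exists>N\<in>sets borel. S k \<subseteq> N \<and> emeasure \<mu>1 N \<le> bnd"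
      using order_trans by blast
  qed
  then have "\<forall>k. \<exists>N. N \<in> sets borel \<and> S k \<subseteq> N \<and> emeasure \<mu>1 N \<le> bnd" by blast
  then obtain N where N0: "\<forall>k. N k \<in> sets borel \<and> S k \<subseteq> N k \<and> emeasure \<mu>1 (N k) \<le> bnd"
    using choice[of "\<lambda>k N. N \<in> sets borel \<and> S k \<subseteq> N \<and> emeasure \<mu>1 N \<le> bnd"] by blast
  have N: "\<And>k. N k \<in> sets borel" "\<And>k. S k \<subseteq> N k" "\<And>k. emeasure \<mu>1 (N k) \<le> bnd"
    using N0 by auto
  define H where "H = (\<Union>k. \<Inter>m\<in>{k..}. N m)"
  have s1: "sets \<mu>1 = sets borel" using r1 by (simp add: radon_measure_def)
  have Hk: "(\<Inter>m\<in>{k..}. N m) \<in> sets borel" for k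
    using N(1) by (intro sets.countable_INT') auto
  have Hm: "H \<in> sets borel" unfolding H_def using Hk by auto
  have cover: "M \<inter> (ball 0 R - A) \<subseteq> H"
  proof
    fix x assume x: "x \<in> M \<inter> (ball 0 R - A)"
    then have xB: "x \<in> M \<inter> B" by (simp add: B_def)
    obtain \<rho> where \<rho>: "\<rho> > 0" "\<forall>r. 0 < r \<and> r < \<rho> \<longrightarrow> (LINT y:ball x r|lebesgue. norm (b y)) \<le> e * r * measure lebesgue (ball x r)"
      using rate_from_lim[OF lim e] xB by blast
    obtain \<eta> where \<eta>: "\<eta> > 0" "ball x \<eta> \<subseteq> U" using U(1,2) xB open_contains_ball by blast
    obtain k where k: "inverse (real (Suc k)) < min \<rho> \<eta>" using reals_Archimedean[of "min \<rho> \<eta>"] \<rho> \<eta> by auto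
    have "x \<in> N m" if "m \<ge> k" for m
    proof -
      have "1 / real (Suc m) \<le> 1 / real (Suc k)" using that by (intro divide_left_mono) auto
      moreover have "1 / real (Suc k) < \<rho>" "1 / real (Suc k) < \<eta>" using k by (auto simp: inverse_eq_divide)
      ultimately have mm: "1 / real (Suc m) < \<rho>" "1 / real (Suc m) < \<eta>" by linarith+
      have "ball x (1 / real (Suc m)) \<subseteq> U" using subset_ball[of "1 / real (Suc m)" \<eta> x] mm \<eta>(2) by auto
      then have "x \<in> S m" unfolding S_def using xB \<rho> mm by auto
      then show ?thesis using N(2) by auto
    qed
    then show "x \<in> H" unfolding H_def by auto
  qed
  have "emeasure \<mu>1 H = (SUP k. emeasure \<mu>1 (\<Inter>m\<in>{k..}. N m))"
    unfolding H_def
  proof (rule SUP_emeasure_incseq[symmetric])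
    show "range (\<lambda>k. \<Inter>m\<in>{k..}. N m) \<subseteq> sets \<mu>1" using Hk s1 by auto
    show "incseq (\<lambda>k. \<Inter>m\<in>{k..}. N m)" by (auto simp: incseq_def)
  qed
  also have "\<dots> \<le> bnd"
  proof (rule SUP_least)
    fix k
    have "emeasure \<mu>1 (\<Inter>m\<in>{k..}. N m) \<le> emeasure \<mu>1 (N k)"
      using N(1) s1 by (intro emeasure_mono) auto
    then show "emeasure \<mu>1 (\<Inter>m\<in>{k..}. N m) \<le> bnd" using N(3)[of k] by simp
  qed
  finally show ?thesis using Hm cover unfolding bnd_def L_def by blast
qed




lemma le_zero_seq:
  assumes "\<And>n. (x::ennreal) \<le> ennreal (inverse (real (Suc n)) * K)"
  shows "x = 0"
proof -
  have "(\<lambda>n. ennreal (inverse (real (Suc n)) * K)) \<longlonglongrightarrow> ennreal 0"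
    by (intro tendsto_ennrealI tendsto_mult_left_zero LIMSEQ_inverse_real_of_nat)
  then have "x \<le> ennreal 0"
    by (rule LIMSEQ_le_const) (use assms in auto)
  then show ?thesis by simp
qed

lemma half:
  fixes b :: "'a::euclidean_space \<Rightarrow> 'a" and u :: "'a \<Rightarrow> real" and M A :: "'a set"
  assumes r1: "radon_measure \<mu>1" and r2: "radon_measure \<mu>2"
    and div: "div_eq u b \<mu>1 \<mu>2"
    and Cu: "AE x in lebesgue. \<bar>u x\<bar> \<le> Cu" "Cu \<ge> 0"
    and intb: "\<And>z r. set_integrable lebesgue (ball z r) (\<lambda>x. norm (b x))"
    and G: "G \<ge> 0" "\<And>t. t \<le> 1 \<Longrightarrow> \<bar>F 1 t\<bar> \<le> G"
    and A: "A \<in> sets borel" "emeasure \<mu>1 A = 0" "emeasure \<mu>2 (UNIV - A) = 0"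
    and lim: "\<And>x. x \<in> M \<Longrightarrow> ((\<lambda>r. (LINT y:ball x r|lebesgue. norm (b y)) / measure lebesgue (ball x r) / r) \<longlongrightarrow> 0) (at_right 0)"
  shows "\<exists>N\<in>sets borel. M \<subseteq> N \<and> emeasure \<mu>1 N = 0"
proof -
  define K where "K = (\<lambda>R::nat. exp 2 * 2 ^ DIM('a) + exp 2 * 4 ^ DIM('a) * (4 * Cu * G) * measure lborel (ball (0::'a) (real R + 1)))"
  have "\<forall>R n. \<exists>H. H \<in> sets borel \<and> M \<inter> (ball 0 (real R) - A) \<subseteq> H \<and>
      emeasure \<mu>1 H \<le> ennreal (inverse (real (Suc n)) * K R)"
  proof (intro allI)
    fix R n :: nat
    have "inverse (real (Suc n)) > 0" by simp
    from step1[OF r1 r2 div Cu intb G A(1,3) lim this, where R="real R"]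
    show "\<exists>H. H \<in> sets borel \<and> M \<inter> (ball 0 (real R) - A) \<subseteq> H \<and>
      emeasure \<mu>1 H \<le> ennreal (inverse (real (Suc n)) * K R)"
      unfolding K_def by blast
  qed
  then obtain H where H: "\<And>R n. H R n \<in> sets borel" "\<And>R n. M \<inter> (ball 0 (real R) - A) \<subseteq> H R n"
      "\<And>R n. emeasure \<mu>1 (H R n) \<le> ennreal (inverse (real (Suc n)) * K R)"
    by metis
  have s1: "sets \<mu>1 = sets borel" using r1 by (simp add: radon_measure_def)
  define NR where "NR = (\<lambda>R. (\<Inter>n. H R n) \<union> A)"
  have NRm: "NR R \<in> sets borel" for R unfolding NR_def using H(1) A(1) by auto
  have NR0: "emeasure \<mu>1 (NR R) = 0" for R
  proof -
    have "emeasure \<mu>1 (\<Inter>n. H R n) = 0"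
    proof (rule le_zero_seq)
      fix n
      have "emeasure \<mu>1 (\<Inter>n. H R n) \<le> emeasure \<mu>1 (H R n)"
        using H(1) s1 by (intro emeasure_mono) auto
      then show "emeasure \<mu>1 (\<Inter>n. H R n) \<le> ennreal (inverse (real (Suc n)) * K R)"
        using H(3)[of R n] by simp
    qed
    moreover have "emeasure \<mu>1 (NR R) \<le> emeasure \<mu>1 (\<Inter>n. H R n) + emeasure \<mu>1 A"
      unfolding NR_def using H(1) A(1) s1 by (intro emeasure_subadditive) auto
    ultimately show ?thesis using A(2) by simp
  qed
  have "M \<subseteq> (\<Union>R. NR R)"
  proof
    fix x assume x: "x \<in> M"
    obtain R :: nat where "norm x < real R" using reals_Archimedean2 by blast
    then have "x \<in> ball 0 (real R)" by simp
    then have "x \<in> NR R" using x H(2)[of R] unfolding NR_def by blast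
    then show "x \<in> (\<Union>R. NR R)" by blast
  qed
  moreover have "emeasure \<mu>1 (\<Union>R. NR R) = 0"
    using NR0 NRm s1 by (intro emeasure_UN_eq_0) auto
  moreover have "(\<Union>R. NR R) \<in> sets borel" using NRm by auto
  ultimately show ?thesis by blast
qed

theorem mainTheorem2:
  fixes b :: "'a::euclidean_space \<Rightarrow> 'a" and u :: "'a \<Rightarrow> real"
    and \<mu>p \<mu>m :: "'a measure"
  assumes b_borel: "b \<in> borel_measurable borel"
    and b_bounded: "bounded (range b)"
    and b_BV: "BV_loc b"
    and u_meas: "u \<in> borel_measurable lebesgue"
    and u_Linf: "\<exists>C. AE x in lebesgue. \<bar>u x\<bar> \<le> C"
    and lambda: "signed_radon \<mu>p \<mu>m"
    and div: "div_eq u b \<mu>p \<mu>m"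
  defines "M \<equiv> {x. b x = 0 \<and>
     ((\<lambda>r. (LINT y:ball x r|lebesgue. norm (b y)) / measure lebesgue (ball x r) / r)
        \<longlongrightarrow> 0) (at_right 0)}"
  shows "tv_null \<mu>p \<mu>m M"
proof -
  obtain A where A: "A \<in> sets borel" "emeasure \<mu>p A = 0" "emeasure \<mu>m (UNIV - A) = 0"
    and rp: "radon_measure \<mu>p" and rm: "radon_measure \<mu>m"
    using lambda unfolding signed_radon_def by blast
  obtain C where C: "AE x in lebesgue. \<bar>u x\<bar> \<le> C" using u_Linf by blast
  define Cu where "Cu = max C 0"
  have Cu: "AE x in lebesgue. \<bar>u x\<bar> \<le> Cu" "Cu \<ge> 0"
    using C by (auto simp: Cu_def elim: eventually_mono)
  have Cu': "AE x in lebesgue. \<bar>- u x\<bar> \<le> Cu" using Cu(1) by simp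
  obtain G where G: "G \<ge> 0" "\<And>t. t \<le> 1 \<Longrightarrow> \<bar>F 1 t\<bar> \<le> G" using F1_bound by blast
  have intb: "set_integrable lebesgue (ball z r) (\<lambda>x. norm (b x))" for z r
  proof -
    have "set_integrable lebesgue (cball z r) (\<lambda>x. norm (b x))"
      using b_BV unfolding BV_loc_def by auto
    then show ?thesis by (rule set_integrable_subset) auto
  qed
  have lim: "\<And>x. x \<in> M \<Longrightarrow> ((\<lambda>r. (LINT y:ball x r|lebesgue. norm (b y)) / measure lebesgue (ball x r) / r) \<longlongrightarrow> 0) (at_right 0)"
    unfolding M_def by blast
  obtain N1 where N1: "N1 \<in> sets borel" "M \<subseteq> N1" "emeasure \<mu>p N1 = 0"
    using half[OF rp rm div Cu intb G A lim] by blast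
  have div': "div_eq (\<lambda>x. - u x) b \<mu>m \<mu>p"
    unfolding div_eq_def
  proof (intro allI impI)
    fix \<phi> :: "'a \<Rightarrow> real" assume t: "test_fun \<phi>"
    have e1: "- (\<integral>x. u x * frechet_derivative \<phi> (at x) (b x) \<partial>lebesgue) = (\<integral>x. \<phi> x \<partial>\<mu>p) - (\<integral>x. \<phi> x \<partial>\<mu>m)"
      using div t unfolding div_eq_def by blast
    have e2: "(\<integral>x. - u x * frechet_derivative \<phi> (at x) (b x) \<partial>lebesgue) = - (\<integral>x. u x * frechet_derivative \<phi> (at x) (b x) \<partial>lebesgue)"
      by (simp only: mult_minus_left integral_minus)
    show "- (\<integral>x. - u x * frechet_derivative \<phi> (at x) (b x) \<partial>lebesgue) = (\<integral>x. \<phi> x \<partial>\<mu>m) - (\<integral>x. \<phi> x \<partial>\<mu>p)"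
      using e1 e2 by linarith
  qed
  have A': "UNIV - A \<in> sets borel" "emeasure \<mu>m (UNIV - A) = 0" "emeasure \<mu>p (UNIV - (UNIV - A)) = 0"
    using A by (auto simp: Diff_Diff_Int)
  obtain N2 where N2: "N2 \<in> sets borel" "M \<subseteq> N2" "emeasure \<mu>m N2 = 0"
    using half[OF rm rp div' Cu' Cu(2) intb G A' lim] by blast
  have sp: "sets \<mu>p = sets borel" "sets \<mu>m = sets borel" using rp rm by (auto simp: radon_measure_def)
  have "emeasure \<mu>p (N1 \<inter> N2) = 0"
    using emeasure_mono[of "N1 \<inter> N2" N1 \<mu>p] N1 N2 sp by auto
  moreover have "emeasure \<mu>m (N1 \<inter> N2) = 0"
    using emeasure_mono[of "N1 \<inter> N2" N2 \<mu>m] N1 N2 sp by auto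
  ultimately show ?thesis unfolding tv_null_def using N1 N2
    by (intro bexI[of _ "N1 \<inter> N2"]) auto
qed


end
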